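(* Let $n\ge 1$ and let $T\in M(n;\mathbb{C})$ be non-singular with $\mathrm{Im}\,T$ positive definite. Let $r\in\mathbb{N}$, $A=(a_{ij})\in M(n;\mathbb{Z})$, $p,q\in\mathbb{R}^n$, let $r'\in\mathbb{N}$ be the integer attached to $(r,A)$ as in the context, and let $\mathcal{U}=\{V_1,\dots,V_n,U_1,\dots,U_n\}\subset U(r')$ satisfy $V_jV_k=V_kV_j$, $U_jU_k=U_kU_j$, $\zeta^{-a_{kj}}U_kV_j=V_jU_k$ for all $j,k$, where $\zeta=e^{2\pi\mathbf{i}/r}$. Then the complex vector bundle $E_{(r,A,r',\mathcal{U},p,q)}\to T^{2n}_{J=T}$ with connection $\nabla_{(r,A,r',\mathcal{U},p,q)}$ is holomorphic (that is, the $(0,2)$-part of the curvature of $\nabla_{(r,A,r',\mathcal{U},p,q)}$ vanishes, so that its $(0,1)$-part defines a holomorphic structure) if and only if $AT=(AT)^t$.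
   Context: $T^{2n}_{J=T}:=\mathbb{C}^n/2\pi(\mathbb{Z}^n\oplus T\mathbb{Z}^n)$, identified with $\mathbb{R}^{2n}/2\pi\mathbb{Z}^{2n}$ via real coordinates $(x,y)\in\mathbb{R}^n\times\mathbb{R}^n$, with complex coordinates $z=x+Ty$. Definition of $r'$: choose $\mathcal{A},\mathcal{B}\in GL(n;\mathbb{Z})$ with $\mathcal{A}A\mathcal{B}=\mathrm{diag}(\tilde a_1,\dots,\tilde a_s,0,\dots,0)$, $\tilde a_i\in\mathbb{N}$, $\tilde a_i\mid\tilde a_{i+1}$; write $\tilde a_i/r=a_i'/r_i'$ with $r_i'\in\mathbb{N}$, $a_i'\in\mathbb{Z}$, $\gcd(r_i',a_i')=1$, and set $r':=r_1'\cdots r_s'$ (this depends only on $(r,A)$). The rank-$r'$ complex vector bundle $E_{(r,A,r',\mathcal{U},p,q)}$ is defined by transition functions: its smooth sections are smooth maps $\psi:\mathbb{R}^{2n}\to\mathbb{C}^{r'}$ with $\psi(x+2\pi e_j,y)=e^{\frac{\mathbf{i}}{r}a_jy}V_j\psi(x,y)$ and $\psi(x,y+2\pi e_k)=U_k\psi(x,y)$, where $a_jy:=\sum_i a_{ij}y_i$ ($e_j$ the standard basis vectors). Its connection is $\nabla_{(r,A,r',\mathcal{U},p,q)}:=d-\frac{\mathbf{i}}{2\pi}\left(\frac1r x^tA^t+\frac1r p^t+\frac1r q^tT\right)dy\cdot I_{r'}$, where $dy=(dy_1,\dots,dy_n)^t$; it is compatible with the transition functions. *)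

theory Defs
  imports "HOL-Analysis.Analysis"
begin

text \<open>Points of the universal cover R^{2n} of the torus are pairs (x,y) of real n-vectors;
  tangent vectors are pairs as well.\<close>
type_synonym 'n pt = "(real^'n) \<times> (real^'n)"

definition cscale :: "complex \<Rightarrow> complex^'m^'m \<Rightarrow> complex^'m^'m" where
  "cscale c M = (\<chi> i j. c * M$i$j)"

definition cadj :: "complex^'m^'m \<Rightarrow> complex^'m^'m" where
  "cadj M = (\<chi> i j. cnj (M$j$i))"

definition unitary_mat :: "complex^'m^'m \<Rightarrow> bool" where
  "unitary_mat M \<longleftrightarrow> M ** cadj M = mat 1 \<and> cadj M ** M = mat 1"

text \<open>The integer r' attached to (r,A): choose a Smith normal form (up to permutation of
  the diagonal, which GL(n,Z) allows) P A Q = diag(d), nonzero entries positive and totally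
  ordered by divisibility; write d_i / r = a_i'/r_i' in lowest terms, i.e.
  r_i' = r / gcd(r, d_i), and take the product over the nonzero d_i.\<close>
definition rprime :: "nat \<Rightarrow> int^'n^'n \<Rightarrow> nat" where
  "rprime r A = (SOME m. \<exists>P Q :: int^'n^'n. \<exists>d :: 'n \<Rightarrow> int.
      \<bar>det P\<bar> = 1 \<and> \<bar>det Q\<bar> = 1 \<and>
      P ** A ** Q = (\<chi> i j. if i = j then d i else 0) \<and>
      (\<forall>i. d i \<ge> 0) \<and>
      (\<forall>i j. d i \<noteq> 0 \<longrightarrow> d j \<noteq> 0 \<longrightarrow> d i dvd d j \<or> d j dvd d i) \<and>
      m = (\<Prod>i\<in>{i. d i \<noteq> 0}. r div gcd r (nat (d i))))"

text \<open>The connection 1-form of \<nabla>_{(r,A,r',U,p,q)} = d + omega at the point P = (x,y),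
  evaluated on the tangent vector v = (xi,eta):
  omega = -(i/2pi) (1/r)(x^t A^t + p^t + q^t T) dy \<cdot> I_{r'}.\<close>
definition conn_form ::
  "nat \<Rightarrow> int^'n^'n \<Rightarrow> real^'n \<Rightarrow> real^'n \<Rightarrow> complex^'n^'n \<Rightarrow>
   'n pt \<Rightarrow> 'n pt \<Rightarrow> complex^'m^'m" where
  "conn_form r A p q T P v =
     cscale (- (\<i> / (2 * pi)) *
        (\<Sum>j\<in>UNIV. ((\<Sum>i\<in>UNIV. of_real (fst P $ i) * of_int (A$j$i)) / of_nat r
                      + of_real (p$j) / of_nat r
                      + (\<Sum>i\<in>UNIV. of_real (q$i) * T$i$j) / of_nat r)
                     * of_real (snd v $ j)))
       (mat 1)"

text \<open>Curvature of d + omega for a matrix-valued 1-form omega on R^{2n}: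
  F(u,v) = d omega(u,v) + [omega(u), omega(v)], with
  d omega(u,v) = D_u (omega(v)) - D_v (omega(u)) (constant vector fields u,v).\<close>
definition curvature ::
  "(('n::finite) pt \<Rightarrow> 'n pt \<Rightarrow> complex^('m::finite)^'m) \<Rightarrow> 'n pt \<Rightarrow> 'n pt \<Rightarrow> 'n pt \<Rightarrow> complex^'m^'m" where
  "curvature \<omega> P u v =
     frechet_derivative (\<lambda>Q. \<omega> Q v) (at P) u - frechet_derivative (\<lambda>Q. \<omega> Q u) (at P) v
     + (\<omega> P u ** \<omega> P v - \<omega> P v ** \<omega> P u)"

text \<open>Complex-bilinear extension of a real 2-form to complexified tangent vectors
  a + i b (a, b real tangent vectors).\<close>
definition complexify2 ::
  "('n pt \<Rightarrow> 'n pt \<Rightarrow> complex^'m^'m) \<Rightarrow> ('n pt \<times> 'n pt) \<Rightarrow> ('n pt \<times> 'n pt) \<Rightarrow> complex^'m^'m" where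
  "complexify2 F w1 w2 =
     (F (fst w1) (fst w2) - F (snd w1) (snd w2))
     + cscale \<i> (F (fst w1) (snd w2) + F (snd w1) (fst w2))"

text \<open>Complexified tangent vector w = a + i b lies in T^{0,1} of T^{2n}_{J=T}, i.e. is killed
  by all dz_k, where z = x + T y, so dz(xi,eta) = xi + T eta.\<close>
definition in_T01 :: "complex^'n^'n \<Rightarrow> ('n pt \<times> 'n pt) \<Rightarrow> bool" where
  "in_T01 T w \<longleftrightarrow> (\<forall>k.
     (of_real (fst (fst w) $ k) + \<i> * of_real (fst (snd w) $ k))
     + (\<Sum>l\<in>UNIV. T$k$l * (of_real (snd (fst w) $ l) + \<i> * of_real (snd (snd w) $ l))) = 0)"

definition holomorphic_conn ::
  "complex^'n^'n \<Rightarrow> ('n pt \<Rightarrow> 'n pt \<Rightarrow> complex^'m^'m) \<Rightarrow> bool" where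
  "holomorphic_conn T \<omega> \<longleftrightarrow>
     (\<forall>P w1 w2. in_T01 T w1 \<longrightarrow> in_T01 T w2 \<longrightarrow> complexify2 (curvature \<omega> P) w1 w2 = 0)"

end

theory Submission
  imports Defs
begin

definition Lx :: "nat \<Rightarrow> int^'n^'n \<Rightarrow> 'n pt \<Rightarrow> real^'n \<Rightarrow> complex" where
  "Lx r A v x = - (\<i> / (2 * pi)) *
     (\<Sum>j\<in>UNIV. ((\<Sum>i\<in>UNIV. of_real (x $ i) * of_int (A$j$i)) / of_nat r) * of_real (snd v $ j))"

definition Kc :: "nat \<Rightarrow> real^'n \<Rightarrow> real^'n \<Rightarrow> complex^'n^'n \<Rightarrow> 'n pt \<Rightarrow> complex" where
  "Kc r p q T v = - (\<i> / (2 * pi)) *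
     (\<Sum>j\<in>UNIV. (of_real (p$j) / of_nat r + (\<Sum>i\<in>UNIV. of_real (q$i) * T$i$j) / of_nat r) * of_real (snd v $ j))"

lemma cscale_add: "cscale (a + b) M = cscale a M + cscale b M"
  by (simp add: cscale_def vec_eq_iff distrib_right)

lemma cscale_diff: "cscale (a - b) M = cscale a M - cscale b M"
  by (simp add: cscale_def vec_eq_iff left_diff_distrib)

lemma cscale_scaleR: "cscale (c *\<^sub>R a) M = c *\<^sub>R cscale a M"
  by (simp add: cscale_def vec_eq_iff)

lemma cscale_mat1_mult: "cscale a (mat 1) ** cscale b (mat 1) = (cscale (a*b) (mat 1) :: complex^('m::finite)^'m)"
proof -
  have "(\<Sum>k\<in>UNIV. (a * (if i = k then 1 else 0)) * (b * (if k = j then 1 else 0))) = (if i = j then a*b else (0::complex))" for i j :: 'm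
  proof -
    have "(\<Sum>k\<in>UNIV. (a * (if i = k then 1 else 0)) * (b * (if k = j then 1 else 0)))
       = (\<Sum>k\<in>UNIV. if k = i then (if i = j then a*b else (0::complex)) else 0)"
      by (rule sum.cong) auto
    also have "\<dots> = (if i = j then a*b else 0)" by simp
    finally show ?thesis .
  qed
  then show ?thesis
    by (simp add: cscale_def vec_eq_iff matrix_matrix_mult_def mat_def)
qed

lemma conn_split: "conn_form r A p q T P v = cscale (Lx r A v (fst P) + Kc r p q T v) (mat 1)"
proof -
  have "\<And>a b c e :: 'n \<Rightarrow> complex. (\<Sum>j\<in>UNIV. (a j + b j + c j) * e j) = (\<Sum>j\<in>UNIV. a j * e j) + (\<Sum>j\<in>UNIV. (b j + c j) * e j)"
    by (simp add: sum.distrib[symmetric] algebra_simps)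
  note h = this
  show ?thesis unfolding conn_form_def Lx_def Kc_def
    by (simp only: distrib_left h)
qed

lemma Lx_scale: "Lx r A v (c *\<^sub>R x) = of_real c * Lx r A v x"
  unfolding Lx_def by (simp add: sum_distrib_left sum_divide_distrib mult_ac)

lemma Lx_add: "Lx r A v (x + y) = Lx r A v x + Lx r A v y"
  by (simp add: Lx_def sum.distrib ring_distribs add_divide_distrib)

lemma Lx_linear: "linear (\<lambda>Q::('n::finite) pt. Lx r A v (fst Q))"
  by (rule linearI) (simp_all add: Lx_add Lx_scale, simp add: scaleR_conv_of_real)

lemma cs_linear: "linear (\<lambda>Q::('n::finite) pt. cscale (Lx r A v (fst Q)) (mat 1) :: complex^('m::finite)^'m)"
  apply (rule linearI)
  using Lx_linear[of r A v, unfolded linear_iff]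
   apply (simp_all add: cscale_add cscale_scaleR)
  done

lemma deriv_conn: fixes P :: "('n::finite) pt" shows "frechet_derivative (\<lambda>Q. (conn_form r A p q T Q v :: complex^('m::finite)^'m)) (at P)
   = (\<lambda>u. cscale (Lx r A v (fst u)) (mat 1))"
proof -
  have bl: "bounded_linear (\<lambda>Q::'n pt. cscale (Lx r A v (fst Q)) (mat 1) :: complex^'m^'m)"
    by (rule linear_conv_bounded_linear[THEN iffD1, OF cs_linear])
  have "((\<lambda>Q. cscale (Lx r A v (fst Q)) (mat 1) + cscale (Kc r p q T v) (mat 1) :: complex^'m^'m)
     has_derivative (\<lambda>u. cscale (Lx r A v (fst u)) (mat 1))) (at P)"
    by (rule has_derivative_add_const, rule bounded_linear_imp_has_derivative[OF bl])
  then have "((\<lambda>Q. (conn_form r A p q T Q v :: complex^'m^'m))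
     has_derivative (\<lambda>u. cscale (Lx r A v (fst u)) (mat 1))) (at P)"
    unfolding conn_split cscale_add .
  from frechet_derivative_at[OF this] show ?thesis by (rule sym)
qed

lemma curv: "curvature (conn_form r A p q T :: ('n::finite) pt \<Rightarrow> 'n pt \<Rightarrow> complex^('m::finite)^'m) P u v
   = cscale (Lx r A v (fst u) - Lx r A u (fst v)) (mat 1)"
proof -
  have "cscale (a*b) (mat 1) - cscale (b*a) (mat 1) = (0::complex^'m^'m)" for a b
    by (simp only: mult.commute[of a b] diff_self)
  note h = this
  show ?thesis
    unfolding curvature_def deriv_conn unfolding conn_split cscale_mat1_mult
    by (simp only: h add_0_right cscale_diff)
qed

definition Xc :: "('n::finite) pt \<times> 'n pt \<Rightarrow> 'n \<Rightarrow> complex" where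
  "Xc w = (\<lambda>j. of_real (fst (fst w) $ j) + \<i> * of_real (fst (snd w) $ j))"
definition Yc :: "('n::finite) pt \<times> 'n pt \<Rightarrow> 'n \<Rightarrow> complex" where
  "Yc w = (\<lambda>j. of_real (snd (fst w) $ j) + \<i> * of_real (snd (snd w) $ j))"
definition G :: "int^'n^'n \<Rightarrow> ('n::finite \<Rightarrow> complex) \<Rightarrow> ('n \<Rightarrow> complex) \<Rightarrow> complex" where
  "G A X Y = (\<Sum>j\<in>UNIV. \<Sum>i\<in>UNIV. X i * of_int (A$j$i) * Y j)"
definition H :: "complex^'n^'n \<Rightarrow> ('n::finite \<Rightarrow> complex) \<Rightarrow> ('n \<Rightarrow> complex) \<Rightarrow> complex" where
  "H M Y Z = (\<Sum>j\<in>UNIV. \<Sum>l\<in>UNIV. M$j$l * Y l * Z j)"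
definition kap :: "nat \<Rightarrow> complex" where
  "kap r = - (\<i> / (2 * pi)) / of_nat r"

lemma Lx_G: "Lx r A v x = kap r * G A (\<lambda>i. of_real (x$i)) (\<lambda>j. of_real (snd v $ j))"
  unfolding Lx_def G_def kap_def
  by (simp add: sum_distrib_left sum_distrib_right sum_divide_distrib mult_ac)

lemma G_add1: "G A (\<lambda>j. X j + Y j) Z = G A X Z + G A Y Z"
  unfolding G_def by (simp add: distrib_right sum.distrib)
lemma G_add2: "G A Z (\<lambda>j. X j + Y j) = G A Z X + G A Z Y"
  unfolding G_def by (simp add: distrib_left sum.distrib)
lemma G_cmul1: "G A (\<lambda>j. c * X j) Z = c * G A X Z"
  unfolding G_def by (simp add: sum_distrib_left mult_ac)
lemma G_cmul2: "G A Z (\<lambda>j. c * X j) = c * G A Z X"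
  unfolding G_def by (simp add: sum_distrib_left mult_ac)

lemma G_expand: "G A (\<lambda>j. a j + \<i> * b j) (\<lambda>j. c j + \<i> * d j)
   = G A a c - G A b d + \<i> * (G A a d + G A b c)"
  by (simp add: G_add1 G_add2 G_cmul1 G_cmul2 algebra_simps)

lemma cscale_cscale: "cscale a (cscale b M) = cscale (a*b) M"
  by (simp add: cscale_def vec_eq_iff mult.assoc)

lemma cplx: "complexify2 (curvature (conn_form r A p q T :: ('n::finite) pt \<Rightarrow> 'n pt \<Rightarrow> complex^('m::finite)^'m) P) w1 w2
   = cscale (kap r * (G A (Xc w1) (Yc w2) - G A (Xc w2) (Yc w1))) (mat 1)"
proof -
  have e: "(Lx r A (fst w2) (fst (fst w1)) - Lx r A (fst w1) (fst (fst w2)))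
        - (Lx r A (snd w2) (fst (snd w1)) - Lx r A (snd w1) (fst (snd w2)))
        + \<i> * ((Lx r A (snd w2) (fst (fst w1)) - Lx r A (fst w1) (fst (snd w2)))
              + (Lx r A (fst w2) (fst (snd w1)) - Lx r A (snd w1) (fst (fst w2))))
     = kap r * (G A (Xc w1) (Yc w2) - G A (Xc w2) (Yc w1))"
    unfolding Lx_G Xc_def Yc_def G_expand by (simp add: algebra_simps)
  show ?thesis
    unfolding complexify2_def curv cscale_cscale
    by (simp only: e[symmetric] cscale_add cscale_diff cscale_cscale[symmetric])
qed

lemma cscale_eq0: "(cscale c (mat 1) :: complex^('m::finite)^'m) = 0 \<longleftrightarrow> c = 0"
proof
  assume "(cscale c (mat 1) :: complex^('m::finite)^'m) = 0"
  then have "(cscale c (mat 1) :: complex^('m::finite)^'m) $ undefined $ undefined = 0" by simp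
  then show "c = 0" by (simp add: cscale_def mat_def)
qed (simp add: cscale_def vec_eq_iff mat_def)

lemma T01_iff: "in_T01 T w \<longleftrightarrow> (\<forall>k. Xc w k + (\<Sum>l\<in>UNIV. T$k$l * Yc w l) = 0)"
  unfolding in_T01_def Xc_def Yc_def by simp

lemma G_T:
  assumes "\<forall>k. X k + (\<Sum>l\<in>UNIV. T$k$l * Y l) = 0"
  shows "G A X Z = - H ((\<chi> i j. of_int (A$i$j)) ** T) Y Z"
proof -
  have X: "X = (\<lambda>k. - (\<Sum>l\<in>UNIV. T$k$l * Y l))"
    using assms by (auto simp: fun_eq_iff eq_neg_iff_add_eq_0)
  have inner: "(\<Sum>i\<in>UNIV. (- (\<Sum>l\<in>UNIV. T$i$l * Y l)) * of_int (A$j$i) * Z j)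
      = - (\<Sum>l\<in>UNIV. (\<Sum>i\<in>UNIV. of_int (A$j$i) * T$i$l) * Y l * Z j)" for j
  proof -
    have "(\<Sum>i\<in>UNIV. (- (\<Sum>l\<in>UNIV. T$i$l * Y l)) * of_int (A$j$i) * Z j)
        = - (\<Sum>i\<in>UNIV. \<Sum>l\<in>UNIV. of_int (A$j$i) * T$i$l * Y l * Z j)"
      by (simp add: sum_distrib_left sum_distrib_right sum_negf mult_ac)
    also have "\<dots> = - (\<Sum>l\<in>UNIV. \<Sum>i\<in>UNIV. of_int (A$j$i) * T$i$l * Y l * Z j)"
      by (subst sum.swap) simp
    also have "\<dots> = - (\<Sum>l\<in>UNIV. (\<Sum>i\<in>UNIV. of_int (A$j$i) * T$i$l) * Y l * Z j)"
      by (simp add: sum_distrib_right)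
    finally show ?thesis .
  qed
  show ?thesis
    unfolding X G_def H_def inner by (simp add: matrix_matrix_mult_def sum_negf)
qed

lemma H_unit: "H M (\<lambda>l. if l = a then 1 else 0) (\<lambda>l. if l = b then 1 else 0) = M$b$a"
proof -
  have i1: "(\<Sum>l\<in>UNIV. M$j$l * (if l = a then 1 else 0) * z) = M$j$a * z" for j z
  proof -
    have "(\<Sum>l\<in>UNIV. M$j$l * (if l = a then 1 else 0) * z) = (\<Sum>l\<in>UNIV. if l = a then M$j$a * z else 0)"
      by (rule sum.cong) auto
    then show ?thesis by simp
  qed
  have i2: "(\<Sum>j\<in>UNIV. M$j$a * (if j = b then 1 else 0)) = M$b$a"
  proof -
    have "(\<Sum>j\<in>UNIV. M$j$a * (if j = b then 1 else 0)) = (\<Sum>j\<in>UNIV. if j = b then M$b$a else 0)"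
      by (rule sum.cong) auto
    then show ?thesis by simp
  qed
  show ?thesis unfolding H_def i1 i2 ..
qed

lemma H_sym:
  assumes "M = transpose M"
  shows "H M Y Z = H M Z Y"
proof -
  have s: "M$l$j = M$j$l" for l j using assms by (metis transpose_def vec_lambda_beta)
  have "H M Z Y = (\<Sum>l\<in>UNIV. \<Sum>j\<in>UNIV. M$j$l * Z l * Y j)" unfolding H_def by (rule sum.swap)
  also have "\<dots> = H M Y Z" unfolding H_def by (simp add: s mult_ac)
  finally show ?thesis by simp
qed

definition mkw :: "complex^'n^'n \<Rightarrow> ('n::finite \<Rightarrow> complex) \<Rightarrow> 'n pt \<times> 'n pt" where
  "mkw T Y = ((\<chi> k. Re (- (\<Sum>l\<in>UNIV. T$k$l * Y l)), \<chi> k. Re (Y k)),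
              (\<chi> k. Im (- (\<Sum>l\<in>UNIV. T$k$l * Y l)), \<chi> k. Im (Y k)))"

lemma mkw_Y: "Yc (mkw T Y) = Y"
  unfolding Yc_def mkw_def by (simp add: fun_eq_iff complex_eq_iff)
lemma mkw_X: "Xc (mkw T Y) = (\<lambda>k. - (\<Sum>l\<in>UNIV. T$k$l * Y l))"
  unfolding Xc_def mkw_def by (simp only: fst_conv snd_conv vec_lambda_beta complex_eq[symmetric])
lemma mkw_T01: "in_T01 T (mkw T Y)"
  unfolding T01_iff mkw_Y mkw_X by simp

theorem proposition3p1:
  fixes T :: "complex^'n^'n" and r :: nat and A :: "int^'n^'n"
    and p q :: "real^'n"
    and V U :: "'n \<Rightarrow> complex^'m^'m"
  assumes "invertible T"
    and "\<forall>v :: real^'n. v \<noteq> 0 \<longrightarrow> (\<Sum>i\<in>UNIV. \<Sum>j\<in>UNIV. v$i * Im (T$i$j) * v$j) > 0"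
    and "r > 0"
    and "CARD('m) = rprime r A"
    and "\<forall>j. unitary_mat (V j) \<and> unitary_mat (U j)"
    and "\<forall>j k. V j ** V k = V k ** V j"
    and "\<forall>j k. U j ** U k = U k ** U j"
    and "\<forall>j k. cscale (exp (2 * pi * \<i> / of_nat r) powi (- A$k$j)) (U k ** V j) = V j ** U k"
  shows "holomorphic_conn T (conn_form r A p q T :: 'n pt \<Rightarrow> 'n pt \<Rightarrow> complex^'m^'m)
     \<longleftrightarrow> (\<chi> i j. of_int (A$i$j)) ** T = transpose ((\<chi> i j. of_int (A$i$j)) ** T)"
proof -
  define M :: "complex^'n^'n" where "M = (\<chi> i j. of_int (A$i$j)) ** T"
  have k0: "kap r \<noteq> 0" using assms(3) by (simp add: kap_def)
  have step: "holomorphic_conn T (conn_form r A p q T :: 'n pt \<Rightarrow> 'n pt \<Rightarrow> complex^'m^'m)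
     \<longleftrightarrow> (\<forall>w1 w2. in_T01 T w1 \<longrightarrow> in_T01 T w2 \<longrightarrow> H M (Yc w1) (Yc w2) = H M (Yc w2) (Yc w1))"
  proof -
    have "G A (Xc w1) (Yc w2) - G A (Xc w2) (Yc w1) = 0 \<longleftrightarrow> H M (Yc w1) (Yc w2) = H M (Yc w2) (Yc w1)"
      if "in_T01 T w1" "in_T01 T w2" for w1 w2
    proof -
      have "G A (Xc w1) (Yc w2) = - H M (Yc w1) (Yc w2)"
        unfolding M_def by (rule G_T) (use that in \<open>simp add: T01_iff\<close>)
      moreover have "G A (Xc w2) (Yc w1) = - H M (Yc w2) (Yc w1)"
        unfolding M_def by (rule G_T) (use that in \<open>simp add: T01_iff\<close>)
      ultimately have "G A (Xc w1) (Yc w2) - G A (Xc w2) (Yc w1) = H M (Yc w2) (Yc w1) - H M (Yc w1) (Yc w2)"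
        by simp
      then show ?thesis by (metis right_minus_eq)
    qed
    then show ?thesis
      unfolding holomorphic_conn_def cplx cscale_eq0 using k0 by auto
  qed
  have "(\<forall>w1 w2. in_T01 T w1 \<longrightarrow> in_T01 T w2 \<longrightarrow> H M (Yc w1) (Yc w2) = H M (Yc w2) (Yc w1))
      \<longleftrightarrow> M = transpose M"
  proof
    assume h: "\<forall>w1 w2. in_T01 T w1 \<longrightarrow> in_T01 T w2 \<longrightarrow> H M (Yc w1) (Yc w2) = H M (Yc w2) (Yc w1)"
    have "M$b$a = M$a$b" for a b
    proof -
      have "H M (Yc (mkw T (\<lambda>l. if l = a then 1 else 0))) (Yc (mkw T (\<lambda>l. if l = b then 1 else 0)))
          = H M (Yc (mkw T (\<lambda>l. if l = b then 1 else 0))) (Yc (mkw T (\<lambda>l. if l = a then 1 else 0)))"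
        using h mkw_T01 by blast
      then show ?thesis unfolding mkw_Y H_unit .
    qed
    then show "M = transpose M" by (simp add: vec_eq_iff transpose_def)
  next
    assume "M = transpose M"
    then show "\<forall>w1 w2. in_T01 T w1 \<longrightarrow> in_T01 T w2 \<longrightarrow> H M (Yc w1) (Yc w2) = H M (Yc w2) (Yc w1)"
      using H_sym by blast
  qed
  with step show ?thesis unfolding M_def by simp
qed

end
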